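(* Let $l\ge 2$ be an even integer and let $G=(V,E)$ be a finite, simple, undirected, connected graph whose vertex set is the disjoint union of $l$ sets $\mathcal{C}_1,\dots,\mathcal{C}_l$, where each $\mathcal{C}_j$ induces a complete graph (clique) and all these cliques are identical (same number of vertices, at least two), arranged in a circle: for each $j$ (indices modulo $l$) there is exactly one edge between $\mathcal{C}_j$ and $\mathcal{C}_{j+1}$, and there are no other edges between distinct cliques. Let $\Pi_1=\{\mathcal{C}_1,\dots,\mathcal{C}_l\}$ and let $\Pi_2=\{\mathcal{C}_1\cup\mathcal{C}_2,\ \mathcal{C}_3\cup\mathcal{C}_4,\dots,\mathcal{C}_{l-1}\cup\mathcal{C}_l\}$ be the partition into the $l/2$ pairs of adjacent cliques. Then $\mathcal{P}^{\star}_{\Pi_1}>\mathcal{P}^{\star}_{\Pi_2}$.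
   Context: For a subset $\mathcal{C}\subseteq V$, let $m_i(\mathcal{C})$ be the number of edges with both endpoints in $\mathcal{C}$ and $m_e(\mathcal{C})$ the number of edges with exactly one endpoint in $\mathcal{C}$. The null-adjusted persistence of $\mathcal{C}$ is $\mathcal{P}^{\star}_{\mathcal{C}}=\frac{2m_i}{2m_i+m_e}-\frac{2m_i+m_e}{2m}$, where $m=|E|$. For a partition $\Pi$ of $V$, the total null-adjusted persistence is $\mathcal{P}^{\star}_{\Pi}=\sum_{\mathcal{C}\in\Pi}\mathcal{P}^{\star}_{\mathcal{C}}$. *)

theory Defs
  imports Complex_Main
begin

definition simple_graph :: "'a set \<Rightarrow> 'a set set \<Rightarrow> bool" where
  "simple_graph V E \<longleftrightarrow> finite V \<and>
     (\<forall>e\<in>E. \<exists>u v. u \<in> V \<and> v \<in> V \<and> u \<noteq> v \<and> e = {u, v})"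

definition graph_connected :: "'a set \<Rightarrow> 'a set set \<Rightarrow> bool" where
  "graph_connected V E \<longleftrightarrow>
     (\<forall>u\<in>V. \<forall>v\<in>V. (u, v) \<in> {(x, y). {x, y} \<in> E}\<^sup>*)"

definition m_int :: "'a set set \<Rightarrow> 'a set \<Rightarrow> nat" where
  "m_int E C = card {e \<in> E. e \<subseteq> C}"

definition m_ext :: "'a set set \<Rightarrow> 'a set \<Rightarrow> nat" where
  "m_ext E C = card {e \<in> E. card (e \<inter> C) = 1}"

definition persistence :: "'a set set \<Rightarrow> 'a set \<Rightarrow> real" where
  "persistence E C =
     2 * real (m_int E C) / (2 * real (m_int E C) + real (m_ext E C))
     - (2 * real (m_int E C) + real (m_ext E C)) / (2 * real (card E))"

definition partition_persistence :: "'a set set \<Rightarrow> 'a set set \<Rightarrow> real" where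
  "partition_persistence E P = (\<Sum>C\<in>P. persistence E C)"

end

theory Submission
  imports Defs
begin

lemma card_pair_int:
  assumes "u \<noteq> v"
  shows "card ({u,v} \<inter> S) = (if u \<in> S then 1 else 0) + (if v \<in> S then 1 else (0::nat))"
  using assms by (cases "u \<in> S"; cases "v \<in> S") (auto simp: Int_insert_left)

locale rc =
  fixes V :: "'a set" and E :: "'a set set" and C :: "nat \<Rightarrow> 'a set" and l :: nat
  assumes l2: "l \<ge> 2" and sg: "simple_graph V E" and cov: "(\<Union>j<l. C j) = V"
  and disj: "\<And>i j. i < l \<Longrightarrow> j < l \<Longrightarrow> i \<noteq> j \<Longrightarrow> C i \<inter> C j = {}"
  and ne: "\<And>j. j < l \<Longrightarrow> \<exists>u v. u \<in> C j \<and> v \<in> C j \<and> u \<noteq> v"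
  and cl: "\<And>j u v. j < l \<Longrightarrow> u \<in> C j \<Longrightarrow> v \<in> C j \<Longrightarrow> u \<noteq> v \<Longrightarrow> {u, v} \<in> E"
  and cross: "\<And>j. j < l \<Longrightarrow>
           card {e \<in> E. e \<inter> C j \<noteq> {} \<and> e \<inter> C (Suc j mod l) \<noteq> {}} = 1"
  and cls: "\<And>e. e \<in> E \<Longrightarrow> (\<exists>j<l. e \<subseteq> C j) \<or>
           (\<exists>j<l. e \<inter> C j \<noteq> {} \<and> e \<inter> C (Suc j mod l) \<noteq> {})"
begin

definition s where "s j = Suc j mod l"
definition p where "p j = (if j = 0 then l - 1 else j - 1)"
definition X where "X j = {e \<in> E. e \<inter> C j \<noteq> {} \<and> e \<inter> C (s j) \<noteq> {}}"
definition x where "x j = the_elem (X j)"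

lemma s_simp: "j < l \<Longrightarrow> s j = (if Suc j = l then 0 else Suc j)"
  unfolding s_def by auto

lemma s_lt: "j < l \<Longrightarrow> s j < l" using l2 by (simp add: s_simp)
lemma s_ne: "j < l \<Longrightarrow> s j \<noteq> j" using l2 by (simp add: s_simp)
lemma p_lt: "j < l \<Longrightarrow> p j < l" using l2 by (auto simp add: p_def)
lemma p_ne: "j < l \<Longrightarrow> p j \<noteq> j" using l2 by (auto simp add: p_def)
lemma s_p: "j < l \<Longrightarrow> s (p j) = j" using l2 by (auto simp: p_def s_simp)
lemma s_inv: "t < l \<Longrightarrow> s t = j \<Longrightarrow> t = p j" using l2 by (auto simp: p_def s_simp split: if_splits)

lemma edge: "e \<in> E \<Longrightarrow> \<exists>u v. u \<in> V \<and> v \<in> V \<and> u \<noteq> v \<and> e = {u, v}"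
  using sg unfolding simple_graph_def by blast

lemma finE: "finite E"
proof -
  have "finite V" using sg unfolding simple_graph_def by blast
  moreover have "E \<subseteq> Pow V" using edge by blast
  ultimately show ?thesis by (meson finite_Pow_iff finite_subset)
qed

lemma uniq: "w \<in> C a \<Longrightarrow> w \<in> C b \<Longrightarrow> a < l \<Longrightarrow> b < l \<Longrightarrow> a = b"
  using disj by blast

lemma X1: "j < l \<Longrightarrow> X j = {x j}"
  using cross[of j] unfolding X_def[symmetric, of j] s_def[symmetric] x_def
  by (metis X_def card_1_singletonE s_def the_elem_eq)

lemma x_ex: "j < l \<Longrightarrow> \<exists>u v. x j = {u, v} \<and> u \<in> C j \<and> v \<in> C (s j)"
proof -
  assume j: "j < l"
  have "x j \<in> X j" using X1[OF j] by simp
  hence xe: "x j \<in> E" and a: "x j \<inter> C j \<noteq> {}" and b: "x j \<inter> C (s j) \<noteq> {}"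
    unfolding X_def by auto
  obtain u v where e: "x j = {u, v}" using edge[OF xe] by blast
  show ?thesis
  proof (cases "u \<in> C j")
    case True
    have "C j \<inter> C (s j) = {}" using disj[of j "s j"] s_lt[OF j] s_ne[OF j] j by auto
    hence "v \<in> C (s j)" using b e True by auto
    thus ?thesis using True e by blast
  next
    case False
    have d: "C j \<inter> C (s j) = {}" using disj[of j "s j"] s_lt[OF j] s_ne[OF j] j by auto
    have "v \<in> C j" using False a e by auto
    moreover have "u \<in> C (s j)" using b e d calculation by auto
    ultimately have "v \<in> C j" "u \<in> C (s j)" by auto
    thus ?thesis using e by (metis insert_commute)
  qed
qed

definition uf where "uf j = (SOME u. \<exists>v. x j = {u, v} \<and> u \<in> C j \<and> v \<in> C (s j))"
definition vf where "vf j = (SOME v. x j = {uf j, v} \<and> uf j \<in> C j \<and> v \<in> C (s j))"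

lemma uv: "j < l \<Longrightarrow> x j = {uf j, vf j} \<and> uf j \<in> C j \<and> vf j \<in> C (s j)"
proof -
  assume j: "j < l"
  have "\<exists>v. x j = {uf j, v} \<and> uf j \<in> C j \<and> v \<in> C (s j)"
    unfolding uf_def using someI_ex[OF x_ex[OF j]] by blast
  thus ?thesis unfolding vf_def by (rule someI_ex)
qed

lemma uv_ne: "j < l \<Longrightarrow> uf j \<noteq> vf j"
  using uv[of j] uniq[of "uf j" j "s j"] s_lt s_ne by metis

lemma xE: "j < l \<Longrightarrow> x j \<in> E"
  using X1[of j] unfolding X_def by auto

lemma classify: "e \<in> E \<Longrightarrow> (\<exists>j<l. e \<subseteq> C j) \<or> (\<exists>j<l. e = x j)"
  using cls[of e] X1 unfolding X_def s_def by blast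

lemma x_eq: "j < l \<Longrightarrow> t < l \<Longrightarrow> s t = j \<Longrightarrow> s j = t \<Longrightarrow> x t = x j"
  unfolding x_def X_def by (metis (no_types, lifting) conj_commute)

lemma Ipos: "j < l \<Longrightarrow> 1 \<le> m_int E (C j)"
proof -
  assume j: "j < l"
  obtain u v where "u \<in> C j" "v \<in> C j" "u \<noteq> v" using ne[OF j] by blast
  hence "{u,v} \<in> {e \<in> E. e \<subseteq> C j}" using cl[OF j] by auto
  hence "{e \<in> E. e \<subseteq> C j} \<noteq> {}" by blast
  moreover have "finite {e \<in> E. e \<subseteq> C j}" using finE by simp
  ultimately show ?thesis unfolding m_int_def
    by (simp add: Suc_leI card_gt_0_iff)
qed

lemma memC: "w \<in> C t \<Longrightarrow> t < l \<Longrightarrow> j < l \<Longrightarrow> (w \<in> C j \<longleftrightarrow> t = j)"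
  using uniq by blast

lemma memD: "w \<in> C t \<Longrightarrow> t < l \<Longrightarrow> Suc j < l \<Longrightarrow> (w \<in> C j \<union> C (Suc j) \<longleftrightarrow> t = j \<or> t = Suc j)"
  using uniq[of w t j] uniq[of w t "Suc j"] by auto

lemma card_x: "t < l \<Longrightarrow> card (x t \<inter> S) = (if uf t \<in> S then 1 else 0) + (if vf t \<in> S then 1 else 0)"
  using uv[of t] uv_ne[of t] card_pair_int by metis

lemma int_edge: "e \<in> E \<Longrightarrow> e \<subseteq> A \<Longrightarrow> A \<subseteq> S \<or> A \<inter> S = {} \<Longrightarrow> card (e \<inter> S) \<noteq> 1"
proof -
  assume eE: "e \<in> E" and eA: "e \<subseteq> A" and AS: "A \<subseteq> S \<or> A \<inter> S = {}"
  obtain u v where e: "e = {u, v}" "u \<noteq> v" using edge[OF eE] by blast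
  show ?thesis
  proof (cases "A \<subseteq> S")
    case True
    hence "e \<inter> S = e" using eA by blast
    thus ?thesis using e by simp
  next
    case False
    hence "e \<inter> S = {}" using eA AS by blast
    thus ?thesis by simp
  qed
qed

lemma ext_C_set: assumes j: "j < l" shows "{e \<in> E. card (e \<inter> C j) = 1} = {x j, x (p j)}"
proof (rule set_eqI, rule iffI)
  fix e assume "e \<in> {e \<in> E. card (e \<inter> C j) = 1}"
  hence eE: "e \<in> E" and c1: "card (e \<inter> C j) = 1" by auto
  show "e \<in> {x j, x (p j)}"
  proof (cases "\<exists>t<l. e \<subseteq> C t")
    case True
    then obtain t where t: "t < l" "e \<subseteq> C t" by blast
    have "C t \<subseteq> C j \<or> C t \<inter> C j = {}" using disj[OF t(1) j] by (cases "t = j") auto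
    thus ?thesis using int_edge[OF eE t(2)] c1 by blast
  next
    case False
    then obtain t where t: "t < l" "e = x t" using classify[OF eE] by blast
    have "uf t \<in> C j \<longleftrightarrow> t = j" using memC[of "uf t" t j] uv[OF t(1)] t(1) j by blast
    moreover have "vf t \<in> C j \<longleftrightarrow> s t = j" using memC[of "vf t" "s t" j] uv[OF t(1)] s_lt[OF t(1)] j by blast
    moreover have c: "(if uf t \<in> C j then 1 else 0) + (if vf t \<in> C j then 1 else 0) = (1::nat)"
      using c1 card_x[OF t(1), of "C j"] t(2) by simp
    moreover have "uf t \<in> C j \<or> vf t \<in> C j" using c by (cases "uf t \<in> C j"; cases "vf t \<in> C j") simp_all
    ultimately have "t = j \<or> s t = j" by blast
    thus ?thesis using s_inv[OF t(1), of j] t(2) by auto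
  qed
next
  fix e assume e: "e \<in> {x j, x (p j)}"
  have "uf j \<in> C j" "vf j \<notin> C j" using uv[OF j] memC[of "vf j" "s j" j] s_lt[OF j] s_ne[OF j] j by auto
  hence 1: "card (x j \<inter> C j) = 1" using card_x[OF j] by simp
  have pj: "p j < l" using p_lt[OF j] .
  have "uf (p j) \<notin> C j" "vf (p j) \<in> C j" using uv[OF pj] memC[of "uf (p j)" "p j" j] pj p_ne[OF j] j s_p[OF j] by auto
  hence 2: "card (x (p j) \<inter> C j) = 1" using card_x[OF pj] by simp
  show "e \<in> {e \<in> E. card (e \<inter> C j) = 1}" using e 1 2 xE[OF j] xE[OF pj] by auto
qed

lemma ext_C: "j < l \<Longrightarrow> m_ext E (C j) = (if l = 2 then 1 else 2)"
proof -
  assume j: "j < l"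
  have pj: "p j < l" using p_lt[OF j] .
  show ?thesis
  proof (cases "l = 2")
    case True
    have "s j = p j" unfolding s_def p_def using True j by (cases j) auto
    hence "x (p j) = x j" using x_eq[OF j pj] s_p[OF j] by metis
    thus ?thesis using ext_C_set[OF j] True unfolding m_ext_def by simp
  next
    case False
    have ne: "x j \<noteq> x (p j)"
    proof
      assume eq: "x j = x (p j)"
      have "uf j \<in> {uf (p j), vf (p j)}" using uv[OF j] uv[OF pj] eq by auto
      moreover have "uf j \<noteq> uf (p j)" using uniq[of "uf j" j "p j"] uv[OF j] uv[OF pj] j pj p_ne[OF j] by auto
      ultimately have "uf j = vf (p j)" by blast
      hence "vf j = uf (p j)" using uv[OF j] uv[OF pj] eq uv_ne[OF j] by (metis doubleton_eq_iff)
      hence "s j = p j" using uniq[of "vf j" "s j" "p j"] uv[OF j] uv[OF pj] s_lt[OF j] pj by auto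
      thus False using False l2 j by (auto simp: s_simp p_def split: if_splits)
    qed
    thus ?thesis using ext_C_set[OF j] False unfolding m_ext_def by simp
  qed
qed

lemma Iset_fin: "finite {e \<in> E. e \<subseteq> A}" using finE by simp

lemma int_D_set:
  assumes j: "Suc j < l"
  shows "{e \<in> E. e \<subseteq> C j \<union> C (Suc j)} = ({e \<in> E. e \<subseteq> C j} \<union> {e \<in> E. e \<subseteq> C (Suc j)}) \<union> {x j}"
proof (rule set_eqI, rule iffI)
  have j0: "j < l" using j by simp
  have sj: "s j = Suc j" using j by (simp add: s_simp)
  fix e assume "e \<in> {e \<in> E. e \<subseteq> C j \<union> C (Suc j)}"
  hence eE: "e \<in> E" and eD: "e \<subseteq> C j \<union> C (Suc j)" by auto
  show "e \<in> ({e \<in> E. e \<subseteq> C j} \<union> {e \<in> E. e \<subseteq> C (Suc j)}) \<union> {x j}"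
  proof (cases "\<exists>t<l. e \<subseteq> C t")
    case True
    then obtain t where t: "t < l" "e \<subseteq> C t" by blast
    obtain u v where e: "e = {u, v}" using edge[OF eE] by blast
    have "u \<in> C t" using e t by blast
    moreover have "u \<in> C j \<union> C (Suc j)" using e eD by blast
    ultimately have "t = j \<or> t = Suc j" using memD[of u t j] t(1) j by blast
    thus ?thesis using t eE by blast
  next
    case False
    then obtain t where t: "t < l" "e = x t" using classify[OF eE] by blast
    have "uf t \<in> C j \<union> C (Suc j)" "vf t \<in> C j \<union> C (Suc j)" using uv[OF t(1)] t(2) eD by auto
    hence t1: "t = j \<or> t = Suc j" and t2: "s t = j \<or> s t = Suc j"
      using memD[of "uf t" t j] memD[of "vf t" "s t" j] uv[OF t(1)] t(1) s_lt[OF t(1)] j by blast+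
    show ?thesis
    proof (cases "t = j")
      case True thus ?thesis using t by blast
    next
      case False
      hence tS: "t = Suc j" using t1 by blast
      have "s t = j" using t2 s_ne[OF t(1)] tS by auto
      hence "s t = j \<and> s j = t" using tS sj by simp
      hence "x t = x j" using x_eq[OF j0 t(1)] by blast
      thus ?thesis using t by blast
    qed
  qed
next
  have j0: "j < l" using j by simp
  have sj: "s j = Suc j" using j by (simp add: s_simp)
  fix e assume e: "e \<in> ({e \<in> E. e \<subseteq> C j} \<union> {e \<in> E. e \<subseteq> C (Suc j)}) \<union> {x j}"
  have "x j \<subseteq> C j \<union> C (Suc j)" using uv[OF j0] sj by auto
  thus "e \<in> {e \<in> E. e \<subseteq> C j \<union> C (Suc j)}" using e xE[OF j0] by blast
qed

lemma int_D:
  assumes j: "Suc j < l"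
  shows "m_int E (C j \<union> C (Suc j)) = m_int E (C j) + m_int E (C (Suc j)) + 1"
proof -
  have j0: "j < l" using j by simp
  have sj: "s j = Suc j" using j by (simp add: s_simp)
  have d1: "{e \<in> E. e \<subseteq> C j} \<inter> {e \<in> E. e \<subseteq> C (Suc j)} = {}"
  proof -
    have "C j \<inter> C (Suc j) = {}" using disj[OF j0 j] by simp
    moreover have "\<And>e. e \<in> E \<Longrightarrow> e \<noteq> {}" using edge by blast
    ultimately show ?thesis by blast
  qed
  have x1: "x j \<notin> {e \<in> E. e \<subseteq> C j} \<union> {e \<in> E. e \<subseteq> C (Suc j)}"
  proof
    assume "x j \<in> {e \<in> E. e \<subseteq> C j} \<union> {e \<in> E. e \<subseteq> C (Suc j)}"
    moreover have "uf j \<in> C j" "vf j \<in> C (Suc j)" using uv[OF j0] sj by auto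
    moreover have "C j \<inter> C (Suc j) = {}" using disj[OF j0 j] by simp
    ultimately show False using uv[OF j0] by blast
  qed
  have "m_int E (C j \<union> C (Suc j)) = card (({e \<in> E. e \<subseteq> C j} \<union> {e \<in> E. e \<subseteq> C (Suc j)}) \<union> {x j})"
    unfolding m_int_def using int_D_set[OF j] by simp
  also have "\<dots> = card ({e \<in> E. e \<subseteq> C j} \<union> {e \<in> E. e \<subseteq> C (Suc j)}) + 1"
    using x1 Iset_fin by simp
  also have "\<dots> = m_int E (C j) + m_int E (C (Suc j)) + 1"
    unfolding m_int_def using d1 Iset_fin by (simp add: card_Un_disjoint)
  finally show ?thesis .
qed

lemma ext_D_set:
  assumes j: "Suc j < l" and l4: "l \<ge> 4"
  shows "{e \<in> E. card (e \<inter> (C j \<union> C (Suc j))) = 1} = {x (p j), x (Suc j)}"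
proof (rule set_eqI, rule iffI)
  have j0: "j < l" using j by simp
  have sj: "s j = Suc j" using j by (simp add: s_simp)
  fix e assume "e \<in> {e \<in> E. card (e \<inter> (C j \<union> C (Suc j))) = 1}"
  hence eE: "e \<in> E" and c1: "card (e \<inter> (C j \<union> C (Suc j))) = 1" by auto
  show "e \<in> {x (p j), x (Suc j)}"
  proof (cases "\<exists>t<l. e \<subseteq> C t")
    case True
    then obtain t where t: "t < l" "e \<subseteq> C t" by blast
    have "C t \<subseteq> C j \<union> C (Suc j) \<or> C t \<inter> (C j \<union> C (Suc j)) = {}"
      using disj[OF t(1) j0] disj[OF t(1) j] by (cases "t = j \<or> t = Suc j") auto
    thus ?thesis using int_edge[OF eE t(2)] c1 by blast
  next
    case False
    then obtain t where t: "t < l" "e = x t" using classify[OF eE] by blast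
    have "uf t \<in> C j \<union> C (Suc j) \<longleftrightarrow> t = j \<or> t = Suc j"
      using memD[of "uf t" t j] uv[OF t(1)] t(1) j by blast
    moreover have "vf t \<in> C j \<union> C (Suc j) \<longleftrightarrow> s t = j \<or> s t = Suc j"
      using memD[of "vf t" "s t" j] uv[OF t(1)] s_lt[OF t(1)] j by blast
    moreover have c: "(if uf t \<in> C j \<union> C (Suc j) then 1 else 0) + (if vf t \<in> C j \<union> C (Suc j) then 1 else 0) = (1::nat)"
      using c1 card_x[OF t(1), of "C j \<union> C (Suc j)"] t(2) by simp
    moreover have "(uf t \<in> C j \<union> C (Suc j)) \<noteq> (vf t \<in> C j \<union> C (Suc j))"
      using c by (cases "uf t \<in> C j \<union> C (Suc j)"; cases "vf t \<in> C j \<union> C (Suc j)") simp_all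
    ultimately have A: "(t = j \<or> t = Suc j) \<noteq> (s t = j \<or> s t = Suc j)" by simp
    have B: "t = p j \<longleftrightarrow> s t = j" using s_inv[OF t(1), of j] s_p[OF j0] by auto
    have "p (Suc j) = j" by (simp add: p_def)
    hence C: "t = j \<longleftrightarrow> s t = Suc j" using s_inv[OF t(1), of "Suc j"] sj by auto
    have "t = p j \<or> t = Suc j" using A B C by argo
    thus ?thesis using t(2) by blast
  qed
next
  have j0: "j < l" using j by simp
  have sj: "s j = Suc j" using j by (simp add: s_simp)
  have pj: "p j < l" using p_lt[OF j0] .
  fix e assume e: "e \<in> {x (p j), x (Suc j)}"
  have ss: "s (Suc j) \<noteq> j \<and> s (Suc j) \<noteq> Suc j" using j l4 by (auto simp: s_simp)
  have pp: "p j \<noteq> j \<and> p j \<noteq> Suc j" using j l4 by (auto simp: p_def)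
  have "uf (Suc j) \<in> C j \<union> C (Suc j)" using uv[OF j] by auto
  moreover have "vf (Suc j) \<notin> C j \<union> C (Suc j)"
    using memD[of "vf (Suc j)" "s (Suc j)" j] uv[OF j] s_lt[OF j] j ss by blast
  ultimately have 1: "card (x (Suc j) \<inter> (C j \<union> C (Suc j))) = 1" using card_x[OF j] by simp
  have "uf (p j) \<notin> C j \<union> C (Suc j)"
    using memD[of "uf (p j)" "p j" j] uv[OF pj] pj j pp by blast
  moreover have "vf (p j) \<in> C j \<union> C (Suc j)" using uv[OF pj] s_p[OF j0] by auto
  ultimately have 2: "card (x (p j) \<inter> (C j \<union> C (Suc j))) = 1" using card_x[OF pj] by simp
  show "e \<in> {e \<in> E. card (e \<inter> (C j \<union> C (Suc j))) = 1}" using e 1 2 xE[OF j] xE[OF pj] by blast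
qed

lemma ext_D:
  assumes j: "Suc j < l" and l4: "l \<ge> 4"
  shows "m_ext E (C j \<union> C (Suc j)) = 2"
proof -
  have j0: "j < l" using j by simp
  have pj: "p j < l" using p_lt[OF j0] .
  have pp: "p j \<noteq> Suc j" using j l4 by (auto simp: p_def)
  have ne: "x (p j) \<noteq> x (Suc j)"
  proof
    assume eq: "x (p j) = x (Suc j)"
    have "uf (Suc j) \<in> {uf (p j), vf (p j)}" using uv[OF j] uv[OF pj] eq by auto
    moreover have "uf (Suc j) \<noteq> uf (p j)" using uniq[of "uf (Suc j)" "Suc j" "p j"] uv[OF j] uv[OF pj] j pj pp by auto
    moreover have "uf (Suc j) \<noteq> vf (p j)" using uniq[of "uf (Suc j)" "Suc j" "j"] uv[OF j] uv[OF pj] j j0 s_p[OF j0] by auto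
    ultimately show False by blast
  qed
  thus ?thesis using ext_D_set[OF j l4] unfolding m_ext_def by simp
qed

lemma ext_V: "m_ext E V = 0"
proof -
  have "{e \<in> E. card (e \<inter> V) = 1} = {}"
  proof -
    { fix e assume eE: "e \<in> E"
      obtain u v where "u \<in> V" "v \<in> V" "u \<noteq> v" "e = {u, v}" using edge[OF eE] by blast
      hence "card (e \<inter> V) = 2" by simp }
    thus ?thesis by auto
  qed
  thus ?thesis unfolding m_ext_def by (metis card.empty)
qed

lemma int_V: "m_int E V = card E"
proof -
  have "{e \<in> E. e \<subseteq> V} = E" using edge by blast
  thus ?thesis unfolding m_int_def by simp
qed

end

lemma sum_pairs: "(\<Sum>j<2*(n::nat). g j) = (\<Sum>i<n. g (2*i) + g (2*i+1)::real)"
  by (induction n) (simp_all add: algebra_simps)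

lemma ineq4:
  fixes a b M :: real
  assumes a: "a \<ge> 1" and b: "b \<ge> 1" and M: "M > 0"
  shows "2*a/(2*a+2) - (2*a+2)/(2*M) + (2*b/(2*b+2) - (2*b+2)/(2*M))
       > 2*(a+b+1)/(2*(a+b+1)+2) - (2*(a+b+1)+2)/(2*M)"
proof -
  have h1: "2*a/(2*a+2) \<ge> 1/2" using a by (simp add: field_simps)
  have h2: "2*b/(2*b+2) \<ge> 1/2" using b by (simp add: field_simps)
  have h3: "2*(a+b+1)/(2*(a+b+1)+2) < 1" using a b by (simp add: field_simps)
  have h4: "(2*a+2)/(2*M) + (2*b+2)/(2*M) = (2*(a+b+1)+2)/(2*M)" using M by (simp add: field_simps)
  show ?thesis using h1 h2 h3 h4 by linarith
qed

lemma ineq2: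
  fixes a b :: real
  assumes a: "a \<ge> 1" and b: "b \<ge> 1"
  shows "2*a/(2*a+1) - (2*a+1)/(2*(a+b+1)) + (2*b/(2*b+1) - (2*b+1)/(2*(a+b+1))) > 0"
proof -
  have h1: "2*a/(2*a+1) \<ge> 2/3" using a by (simp add: field_simps)
  have h2: "2*b/(2*b+1) \<ge> 2/3" using b by (simp add: field_simps)
  have "a+b+1 > 0" using a b by linarith
  hence d: "2*(a+b+1) \<noteq> 0" by simp
  have "(2*a+1)/(2*(a+b+1)) + (2*b+1)/(2*(a+b+1)) = ((2*a+1)+(2*b+1))/(2*(a+b+1))"
    by (rule add_divide_distrib[symmetric])
  also have "(2*a+1)+(2*b+1) = 2*(a+b+1)" by simp
  finally have h4: "(2*a+1)/(2*(a+b+1)) + (2*b+1)/(2*(a+b+1)) = 1" using d by simp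
  show ?thesis using h1 h2 h4 by linarith
qed

lemma two_elems: "card A \<ge> 2 \<Longrightarrow> \<exists>u v. u \<in> A \<and> v \<in> A \<and> u \<noteq> v"
proof -
  assume c: "card A \<ge> 2"
  hence "A \<noteq> {}" by auto
  then obtain u where u: "u \<in> A" by blast
  have "finite A" using c card.infinite by fastforce
  hence "card (A - {u}) \<ge> 1" using c u by simp
  hence "A - {u} \<noteq> {}" by (metis card.empty not_one_le_zero)
  then obtain v where "v \<in> A - {u}" by blast
  thus ?thesis using u by blast
qed

theorem proposition4:
  fixes V :: "'a set" and E :: "'a set set" and C :: "nat \<Rightarrow> 'a set"
    and l k :: nat
  assumes "even l" and "l \<ge> 2"
    and "simple_graph V E" and "graph_connected V E"
    and "(\<Union>j<l. C j) = V"
    and "\<And>i j. i < l \<Longrightarrow> j < l \<Longrightarrow> i \<noteq> j \<Longrightarrow> C i \<inter> C j = {}"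
    and "k \<ge> 2" and "\<And>j. j < l \<Longrightarrow> card (C j) = k"
    and "\<And>j u v. j < l \<Longrightarrow> u \<in> C j \<Longrightarrow> v \<in> C j \<Longrightarrow> u \<noteq> v \<Longrightarrow> {u, v} \<in> E"
    and "\<And>j. j < l \<Longrightarrow>
           card {e \<in> E. e \<inter> C j \<noteq> {} \<and> e \<inter> C (Suc j mod l) \<noteq> {}} = 1"
    and "\<And>e. e \<in> E \<Longrightarrow> (\<exists>j<l. e \<subseteq> C j) \<or>
           (\<exists>j<l. e \<inter> C j \<noteq> {} \<and> e \<inter> C (Suc j mod l) \<noteq> {})"
  shows "partition_persistence E (C ` {..<l})
       > partition_persistence E ((\<lambda>i. C (2 * i) \<union> C (2 * i + 1)) ` {..<l div 2})"
proof -
  have ne: "\<And>j. j < l \<Longrightarrow> \<exists>u v. u \<in> C j \<and> v \<in> C j \<and> u \<noteq> v"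
    using two_elems assms(7,8) by metis
  interpret rc V E C l
    using assms(2,3,5,6,9,10,11) ne by unfold_locales auto
  define D where "D = (\<lambda>i. C (2 * i) \<union> C (2 * i + 1))"
  define M where "M = real (card E)"
  have Cne: "\<And>j. j < l \<Longrightarrow> C j \<noteq> {}" using ne by blast
  have inj1: "inj_on C {..<l}"
  proof (rule inj_onI)
    fix i j assume "i \<in> {..<l}" "j \<in> {..<l}" "C i = C j"
    thus "i = j" using disj[of i j] Cne[of i] by auto
  qed
  have inj2: "inj_on D {..<l div 2}"
  proof (rule inj_onI)
    fix i j assume i: "i \<in> {..<l div 2}" and j: "j \<in> {..<l div 2}" and eq: "D i = D j"
    have il: "2*i < l" "2*j < l" "2*i+1 < l" "2*j+1 < l" using i j by auto
    obtain w where w: "w \<in> C (2*i)" using Cne[OF il(1)] by blast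
    hence "w \<in> C (2*j) \<or> w \<in> C (2*j+1)" using eq unfolding D_def by blast
    hence "2*i = 2*j \<or> 2*i = 2*j+1" using uniq[OF w] il by blast
    thus "i = j" by presburger
  qed
  have S1: "partition_persistence E (C ` {..<l}) = (\<Sum>j<l. persistence E (C j))"
    unfolding partition_persistence_def using sum.reindex[OF inj1] by simp
  have S2: "partition_persistence E (D ` {..<l div 2}) = (\<Sum>i<l div 2. persistence E (D i))"
    unfolding partition_persistence_def using sum.reindex[OF inj2] by simp
  have apos: "\<And>j. j < l \<Longrightarrow> real (m_int E (C j)) \<ge> 1" using Ipos by simp
  have Mpos: "M > 0"
  proof -
    have "x 0 \<in> E" using xE assms(2) by simp
    hence "card E > 0" using finE card_gt_0_iff by blast
    thus ?thesis unfolding M_def by simp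
  qed
  show ?thesis
  proof (cases "l = 2")
    case True
    have L01: "{..<l} = {0,1}" using True by auto
    have V01: "C 0 \<union> C 1 = V" using assms(5) L01 by auto
    have I: "m_int E V = m_int E (C 0) + m_int E (C 1) + 1" using int_D[of 0] V01 True by simp
    have MM: "M = real (m_int E (C 0)) + real (m_int E (C 1)) + 1"
      unfolding M_def using I int_V by simp
    have "partition_persistence E (D ` {..<l div 2}) = persistence E V"
      using S2 True V01 unfolding D_def by simp
    also have "\<dots> = 0" unfolding persistence_def using ext_V int_V Mpos M_def by simp
    finally have R: "partition_persistence E (D ` {..<l div 2}) = 0" .
    have L: "partition_persistence E (C ` {..<l}) = persistence E (C 0) + persistence E (C 1)"
      using S1 L01 by simp
    have e0: "m_ext E (C 0) = 1" "m_ext E (C 1) = 1" using ext_C True by auto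
    have "persistence E (C 0) + persistence E (C 1) > 0"
      unfolding persistence_def e0 M_def[symmetric] MM
      using ineq2[OF apos[of 0] apos[of 1]] True by (simp add: algebra_simps)
    thus ?thesis using L R unfolding D_def by simp
  next
    case False
    have l4: "l \<ge> 4" using False assms(1,2) by presburger
    have ll: "l = 2 * (l div 2)" using assms(1) by simp
    have "partition_persistence E (C ` {..<l}) = (\<Sum>i<l div 2. persistence E (C (2*i)) + persistence E (C (2*i+1)))"
      using S1 sum_pairs[where n="l div 2" and g="\<lambda>j. persistence E (C j)"] ll by simp
    also have "\<dots> > (\<Sum>i<l div 2. persistence E (D i))"
    proof (rule sum_strict_mono)
      show "finite {..<l div 2}" by simp
      have "0 \<in> {..<l div 2}" using assms(2) by simp
      thus "{..<l div 2} \<noteq> {}" by blast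
      fix i assume i: "i \<in> {..<l div 2}"
      have il: "Suc (2*i) < l" "2*i < l" using i by auto
      have eC: "m_ext E (C (2*i)) = 2" "m_ext E (C (2*i+1)) = 2" using ext_C il False by auto
      have eD: "m_ext E (D i) = 2" using ext_D[OF il(1) l4] unfolding D_def by simp
      have iD: "m_int E (D i) = m_int E (C (2*i)) + m_int E (C (2*i+1)) + 1"
        using int_D[OF il(1)] unfolding D_def by simp
      show "persistence E (C (2*i)) + persistence E (C (2*i+1)) > persistence E (D i)"
        unfolding persistence_def eC eD iD M_def[symmetric]
        using ineq4[OF apos[of "2*i"] apos[of "2*i+1"] Mpos] il by (simp add: algebra_simps)
    qed
    finally show ?thesis using S2 unfolding D_def by simp
  qed
qed

end
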